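(* Assume $d=1$. Let $x_0\in\mathcal{M}_0$ with $\lambda_0(x_0)<\Delta\wedge\frac{\sin(\Theta)^2}{4\rho}$. Then there exists $x_0^*\in\mathcal{M}_0$ with $\lambda_0(x_0^* )=0$ and $d_{\mathcal{M}_0}(x_0,x_0^* )\le\frac{2}{\sin(\Theta)}\lambda_0(x_0)$.
   Context: $E=\mathbb{R}^n$. $\mathcal{M}_0$ is a compact $1$-dimensional $\mathcal{C}^2$ manifold and $u:\mathcal{M}_0\to E$ an immersion; $\mathcal{M}_0$ carries the induced metric, with geodesic distance $d_{\mathcal{M}_0}$. For $x_0\in\mathcal{M}_0$, $x=u(x_0)$ and $T_x\mathcal{M}=d_{x_0}u(T_{x_0}\mathcal{M}_0)$. Assumptions: (i) whenever $x_0\ne y_0$ and $x=y$, $T_x\mathcal{M}\ne T_y\mathcal{M}$; (ii) the second fundamental form has operator norm at most $\rho>0$ everywhere; (iii) there is a probability measure $\mu_0$ on $\mathcal{M}_0$ with density $f_0$ w.r.t. the $1$-dimensional Hausdorff measure, $f_0$ Lipschitz for $d_{\mathcal{M}_0}$ and bounded between $f_{\min},f_{\max}>0$. Normal reach: $\lambda_0(x_0)=\inf\{\|x-y\|:\ y_0\ne x_0,\ x-y\perp T_y\mathcal{M}\}$. Let $\mathcal{D}_0=\{(x_0,y_0):x_0\ne y_0,\ x-y\perp T_y\mathcal{M},\ x-y\perp T_x\mathcal{M}\}$ and $\mathcal{C}_0=\{(x_0,y_0):x_0\ne y_0,\ x=y\}$. For $(x_0,y_0)\in\mathcal{C}_0$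 let $\theta(x_0,y_0)\in[0,\pi/2]$ be the angle between the lines $T_x\mathcal{M}$ and $T_y\mathcal{M}$; $\Theta=\inf\{\theta(x_0,y_0):(x_0,y_0)\in\mathcal{C}_0\}$ and $\Delta=\inf\{\|x-y\|:(x_0,y_0)\in\mathcal{D}_0\setminus\mathcal{C}_0\}$. *)

theory Defs
  imports "HOL-Analysis.Analysis"
begin

text \<open>A compact 1-dimensional C2 manifold M0 is modelled as a finite disjoint union of
circles R/(L i)Z, i in I; a point of M0 is a pair (i,s) with 0 <= s < L i.
The immersion u is given on component i by an L i-periodic map gamma i, parametrised
by arc length of the induced metric (unit speed), with derivatives gamma' and gamma''.\<close>

definition pts :: "'i set \<Rightarrow> ('i \<Rightarrow> real) \<Rightarrow> ('i \<times> real) set" where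
  "pts I L = {(i,s). i \<in> I \<and> 0 \<le> s \<and> s < L i}"

definition gdist :: "('i \<Rightarrow> real) \<Rightarrow> 'i \<times> real \<Rightarrow> 'i \<times> real \<Rightarrow> ereal" where
  "gdist L p q = (if fst p = fst q
     then ereal (Inf {\<bar>snd p - snd q + real_of_int k * L (fst p)\<bar> | k. True})
     else \<infinity>)"

definition curve_system ::
  "'i set \<Rightarrow> ('i \<Rightarrow> real) \<Rightarrow> ('i \<Rightarrow> real \<Rightarrow> 'a::euclidean_space)
   \<Rightarrow> ('i \<Rightarrow> real \<Rightarrow> 'a) \<Rightarrow> ('i \<Rightarrow> real \<Rightarrow> 'a) \<Rightarrow> bool" where
  "curve_system I L \<gamma> \<gamma>' \<gamma>'' \<longleftrightarrow> finite I \<and>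
     (\<forall>i\<in>I. L i > 0 \<and> (\<forall>t. \<gamma> i (t + L i) = \<gamma> i t)
        \<and> (\<forall>t. (\<gamma> i has_vector_derivative \<gamma>' i t) (at t))
        \<and> (\<forall>t. (\<gamma>' i has_vector_derivative \<gamma>'' i t) (at t))
        \<and> continuous_on UNIV (\<gamma>'' i)
        \<and> (\<forall>t. norm (\<gamma>' i t) = 1))"

definition tline :: "('i \<Rightarrow> real \<Rightarrow> 'a::euclidean_space) \<Rightarrow> 'i \<times> real \<Rightarrow> 'a set" where
  "tline \<gamma>' p = span {\<gamma>' (fst p) (snd p)}"

definition upt :: "('i \<Rightarrow> real \<Rightarrow> 'a) \<Rightarrow> 'i \<times> real \<Rightarrow> 'a" where
  "upt \<gamma> p = \<gamma> (fst p) (snd p)"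

text \<open>Second fundamental form at (i,s) (unit speed): II(v,w) = v w N, N the normal
part of gamma''; its operator norm is norm N.\<close>
definition sff_norm :: "('i \<Rightarrow> real \<Rightarrow> 'a::euclidean_space) \<Rightarrow> ('i \<Rightarrow> real \<Rightarrow> 'a) \<Rightarrow> 'i \<times> real \<Rightarrow> real" where
  "sff_norm \<gamma>' \<gamma>'' p = norm (upt \<gamma>'' p - (upt \<gamma>'' p \<bullet> upt \<gamma>' p) *\<^sub>R upt \<gamma>' p)"

definition normal_reach ::
  "'i set \<Rightarrow> ('i \<Rightarrow> real) \<Rightarrow> ('i \<Rightarrow> real \<Rightarrow> 'a::euclidean_space) \<Rightarrow> ('i \<Rightarrow> real \<Rightarrow> 'a)
   \<Rightarrow> 'i \<times> real \<Rightarrow> real" where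
  "normal_reach I L \<gamma> \<gamma>' p = Inf {norm (upt \<gamma> p - upt \<gamma> q) | q.
      q \<in> pts I L \<and> q \<noteq> p \<and> (\<forall>v\<in>tline \<gamma>' q. (upt \<gamma> p - upt \<gamma> q) \<bullet> v = 0)}"

definition D0set where
  "D0set I L \<gamma> \<gamma>' = {(p,q). p \<in> pts I L \<and> q \<in> pts I L \<and> p \<noteq> q
      \<and> (\<forall>v\<in>tline \<gamma>' q. (upt \<gamma> p - upt \<gamma> q) \<bullet> v = 0)
      \<and> (\<forall>v\<in>tline \<gamma>' p. (upt \<gamma> p - upt \<gamma> q) \<bullet> v = 0)}"

definition C0set where
  "C0set I L \<gamma> = {(p,q). p \<in> pts I L \<and> q \<in> pts I L \<and> p \<noteq> q \<and> upt \<gamma> p = upt \<gamma> q}"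

definition line_angle where
  "line_angle \<gamma>' p q = arccos \<bar>upt \<gamma>' p \<bullet> upt \<gamma>' q\<bar>"

definition Theta where
  "Theta I L \<gamma> \<gamma>' = Inf (insert (pi/2) ((\<lambda>(p,q). line_angle \<gamma>' p q) ` C0set I L \<gamma>))"

text \<open>Delta as an extended real (Delta = infinity if D0 - C0 is empty).\<close>
definition Delta :: "_ \<Rightarrow> _ \<Rightarrow> _ \<Rightarrow> _ \<Rightarrow> ereal" where
  "Delta I L \<gamma> \<gamma>' = Inf ((\<lambda>(p,q). ereal (norm (upt \<gamma> p - upt \<gamma> q))) ` (D0set I L \<gamma> \<gamma>' - C0set I L \<gamma>))"

end

theory Submission
  imports Defs "HOL-Analysis.Analysis"
begin




lemma vd_inner:
  fixes c :: "real \<Rightarrow> 'a::euclidean_space"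
  assumes "(c has_vector_derivative v) (at t)"
  shows "((\<lambda>t. c t \<bullet> e) has_real_derivative (v \<bullet> e)) (at t)"
proof -
  have "((\<lambda>t. c t \<bullet> e) has_vector_derivative (v \<bullet> e)) (at t)"
    using bounded_linear.has_vector_derivative[OF bounded_linear_inner_left assms] by simp
  then show ?thesis by (simp add: has_real_derivative_iff_has_vector_derivative)
qed

lemma per_deriv:
  fixes f f' :: "real \<Rightarrow> 'a::euclidean_space"
  assumes per: "\<forall>t. f (t + L) = f t" and d: "\<forall>t. (f has_vector_derivative f' t) (at t)"
  shows "f' (t + L) = f' t"
proof -
  have "((\<lambda>x. x + L) has_vector_derivative 1) (at t)"
    by (auto intro!: derivative_eq_intros)
  from vector_diff_chain_at[OF this, of f "f' (t+L)"] d
  have "((f \<circ> (\<lambda>x. x + L)) has_vector_derivative f' (t + L)) (at t)" by simp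
  moreover have "f \<circ> (\<lambda>x. x + L) = f" using per by (auto simp: o_def)
  ultimately have "(f has_vector_derivative f' (t + L)) (at t)" by simp
  then show ?thesis using d vector_derivative_unique_at by blast
qed

lemma per_int:
  fixes f :: "real \<Rightarrow> 'b"
  assumes per: "\<forall>t. f (t + L) = f t"
  shows "f (t + real_of_int k * L) = f t"
proof -
  have n: "f (t + real n * L) = f t" for n t
  proof (induction n arbitrary: t)
    case (Suc n)
    have "f (t + real (Suc n) * L) = f ((t + real n * L) + L)" by (simp add: algebra_simps)
    also have "\<dots> = f (t + real n * L)" using per by blast
    finally show ?case using Suc by simp
  qed simp
  show ?thesis
  proof (cases "k \<ge> 0")
    case True
    then show ?thesis using n[of t "nat k"] by simp
  next
    case False
    then have "f (t + real_of_int k * L + real (nat (-k)) * L) = f (t + real_of_int k * L)"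
      using n by blast
    then show ?thesis using False by simp
  qed
qed

lemma orth_dd:
  fixes c' c'' :: "real \<Rightarrow> 'a::euclidean_space"
  assumes d: "\<forall>t. (c' has_vector_derivative c'' t) (at t)" and u: "\<forall>t. norm (c' t) = 1"
  shows "c'' t \<bullet> c' t = 0"
proof -
  have D: "((\<lambda>t. c' t \<bullet> c' t) has_derivative (\<lambda>h. c' t \<bullet> (h *\<^sub>R c'' t) + (h *\<^sub>R c'' t) \<bullet> c' t)) (at t)"
    using d by (intro has_derivative_inner) (auto simp: has_vector_derivative_def)
  have e: "(\<lambda>h. c' t \<bullet> (h *\<^sub>R c'' t) + (h *\<^sub>R c'' t) \<bullet> c' t) = (*) (2 * (c'' t \<bullet> c' t))"
    by (auto simp: fun_eq_iff inner_commute algebra_simps)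
  have "((\<lambda>t. c' t \<bullet> c' t) has_real_derivative (2 * (c'' t \<bullet> c' t))) (at t)"
    unfolding has_field_derivative_def using D by (simp only: e)
  moreover have "(\<lambda>t. c' t \<bullet> c' t) = (\<lambda>t. 1)" using u by (simp add: dot_square_norm)
  ultimately have "((\<lambda>t. 1::real) has_real_derivative (2 * (c'' t \<bullet> c' t))) (at t)" by simp
  moreover have "((\<lambda>t. 1::real) has_real_derivative 0) (at t)" by simp
  ultimately show ?thesis using DERIV_unique by fastforce
qed



lemma taylor_scalar:
  fixes c c' c'' :: "real \<Rightarrow> 'a::euclidean_space"
  assumes d1: "\<forall>t. (c has_vector_derivative c' t) (at t)"
    and d2: "\<forall>t. (c' has_vector_derivative c'' t) (at t)"
    and bd: "\<forall>t. norm (c'' t) \<le> \<rho>"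
  shows "\<bar>(c (s + h) - c s - h *\<^sub>R c' s) \<bullet> e\<bar> \<le> \<rho> * h\<^sup>2 / 2 * norm e"
proof (cases "h = 0")
  case True then show ?thesis by simp
next
  case False
  define diff where "diff = (\<lambda>m::nat. if m = 0 then (\<lambda>t. c t \<bullet> e) else if m = 1 then (\<lambda>t. c' t \<bullet> e) else (\<lambda>t. c'' t \<bullet> e))"
  have DER: "\<forall>m t. m < 2 \<and> min s (s+h) \<le> t \<and> t \<le> max s (s+h) \<longrightarrow> DERIV (diff m) t :> diff (Suc m) t"
    using d1 d2 by (auto simp: diff_def less_2_cases_iff intro!: vd_inner)
  obtain t where t: "(diff 0) (s+h) = (\<Sum>m<2. diff m s / fact m * (s + h - s) ^ m) + diff 2 t / fact 2 * (s + h - s) ^ 2"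
    using Taylor[of 2 diff "diff 0" "min s (s+h)" "max s (s+h)" s "s+h"] DER False by auto
  then have "c (s+h) \<bullet> e = c s \<bullet> e + h * (c' s \<bullet> e) + (c'' t \<bullet> e) / 2 * h\<^sup>2"
    by (simp add: diff_def numeral_2_eq_2)
  then have eq: "(c (s + h) - c s - h *\<^sub>R c' s) \<bullet> e = (c'' t \<bullet> e) / 2 * h\<^sup>2"
    by (simp add: inner_diff_left)
  have "\<bar>c'' t \<bullet> e\<bar> \<le> \<rho> * norm e"
    using Cauchy_Schwarz_ineq2[of "c'' t" e] bd mult_right_mono[of "norm (c'' t)" \<rho> "norm e"] by auto
  then have "\<bar>(c'' t \<bullet> e) / 2 * h\<^sup>2\<bar> \<le> \<rho> * norm e / 2 * h\<^sup>2"
    by (simp add: abs_mult mult_right_mono)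
  then show ?thesis using eq by (simp add: field_simps)
qed

lemma taylor_vec:
  fixes c c' c'' :: "real \<Rightarrow> 'a::euclidean_space"
  assumes d1: "\<forall>t. (c has_vector_derivative c' t) (at t)"
    and d2: "\<forall>t. (c' has_vector_derivative c'' t) (at t)"
    and bd: "\<forall>t. norm (c'' t) \<le> \<rho>"
  shows "norm (c (s + h) - c s - h *\<^sub>R c' s) \<le> \<rho> * h\<^sup>2 / 2"
proof -
  define v where "v = c (s + h) - c s - h *\<^sub>R c' s"
  have "\<bar>v \<bullet> v\<bar> \<le> \<rho> * h\<^sup>2 / 2 * norm v"
    using taylor_scalar[OF d1 d2 bd, of s h v] by (simp add: v_def)
  then have "norm v * norm v \<le> \<rho> * h\<^sup>2 / 2 * norm v"
    by (simp add: dot_square_norm power2_eq_square)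
  moreover have "\<rho> \<ge> 0" using bd norm_ge_zero order_trans by blast
  ultimately show ?thesis
    by (cases "norm v = 0") (auto simp: v_def)
qed



lemma chord:
  fixes c c' c'' :: "real \<Rightarrow> 'a::euclidean_space"
  assumes d1: "\<forall>t. (c has_vector_derivative c' t) (at t)"
    and d2: "\<forall>t. (c' has_vector_derivative c'' t) (at t)"
    and bd: "\<forall>t. norm (c'' t) \<le> \<rho>" and u: "\<forall>t. norm (c' t) = 1"
  shows "\<bar>(c (s + h) - c s) \<bullet> c' s\<bar> \<ge> \<bar>h\<bar> - \<rho> * h\<^sup>2 / 2"
proof -
  have "\<bar>(c (s + h) - c s - h *\<^sub>R c' s) \<bullet> c' s\<bar> \<le> \<rho> * h\<^sup>2 / 2"
    using taylor_scalar[OF d1 d2 bd, of s h "c' s"] u by simp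
  moreover have "c' s \<bullet> c' s = 1" using u by (simp add: dot_square_norm)
  ultimately have "\<bar>(c (s + h) - c s) \<bullet> c' s - h\<bar> \<le> \<rho> * h\<^sup>2 / 2"
    by (simp add: inner_diff_left)
  then show ?thesis by arith
qed


lemma inner_two: fixes T U :: "'a::euclidean_space"
  assumes TT: "T \<bullet> T = 1" and UU: "U \<bullet> U = 1"
  shows "(u *\<^sub>R T - v *\<^sub>R U) \<bullet> (u *\<^sub>R T - v *\<^sub>R U) = u * u + v * v - 2 * u * v * (T \<bullet> U)"
proof -
  have "(u *\<^sub>R T - v *\<^sub>R U) \<bullet> (u *\<^sub>R T - v *\<^sub>R U) = u * u * (T \<bullet> T) - u * v * (T \<bullet> U) - v * u * (U \<bullet> T) + v * v * (U \<bullet> U)"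
    by (simp only: inner_diff_left inner_diff_right inner_scaleR_left inner_scaleR_right) (simp add: algebra_simps)
  then show ?thesis by (simp add: TT UU inner_commute[of U T] algebra_simps)
qed

lemma sq_id: fixes u v x :: real shows "u\<^sup>2 + v\<^sup>2 - 2 * u * v * x = (v - u * x)\<^sup>2 + u\<^sup>2 * (1 - x\<^sup>2)"
  by (simp add: power2_diff power_mult_distrib right_diff_distrib)

lemma angle_lb:
  fixes T U :: "'a::euclidean_space"
  assumes "norm T = 1" "norm U = 1" "\<bar>T \<bullet> U\<bar> \<le> cos th" "0 \<le> sin th"
  shows "norm (u *\<^sub>R T - v *\<^sub>R U) \<ge> sin th * \<bar>u\<bar>"
proof -
  have TT: "T \<bullet> T = 1" and UU: "U \<bullet> U = 1" using assms by (simp_all add: dot_square_norm)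
  have n2: "(norm (u *\<^sub>R T - v *\<^sub>R U))\<^sup>2 = u\<^sup>2 + v\<^sup>2 - 2 * u * v * (T \<bullet> U)"
    unfolding power2_norm_eq_inner inner_two[OF TT UU] by (simp add: power2_eq_square)
  have "\<bar>T \<bullet> U\<bar>\<^sup>2 \<le> (cos th)\<^sup>2"
    by (rule power_mono[OF assms(3) abs_ge_zero])
  then have c2: "(T \<bullet> U)\<^sup>2 \<le> (cos th)\<^sup>2" by simp
  have e1: "u\<^sup>2 + v\<^sup>2 - 2 * u * v * (T \<bullet> U) = (v - u * (T \<bullet> U))\<^sup>2 + u\<^sup>2 * (1 - (T \<bullet> U)\<^sup>2)"
    by (rule sq_id)
  have e2: "u\<^sup>2 * (1 - (cos th)\<^sup>2) \<le> u\<^sup>2 * (1 - (T \<bullet> U)\<^sup>2)"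
    using c2 by (intro mult_left_mono) auto
  have e3: "1 - (cos th)\<^sup>2 = (sin th)\<^sup>2" by (simp add: sin_squared_eq)
  have e4: "0 \<le> (v - u * (T \<bullet> U))\<^sup>2" by simp
  have e5: "(sin th * \<bar>u\<bar>)\<^sup>2 = u\<^sup>2 * (1 - (cos th)\<^sup>2)"
    by (simp only: e3 power_mult_distrib power2_abs mult.commute)
  have "(sin th * \<bar>u\<bar>)\<^sup>2 \<le> (norm (u *\<^sub>R T - v *\<^sub>R U))\<^sup>2"
    unfolding e5 n2 e1 using e2 e4 by linarith
  then show ?thesis by (rule power2_le_imp_le[OF _ norm_ge_zero])
qed

lemma quad_finish:
  fixes S \<rho> r0 r M :: real
  assumes "S > 0" "\<rho> > 0" "0 < r0" "r < 2 * r0 - 4 * \<rho> * r0\<^sup>2 / S\<^sup>2" "r0 < S\<^sup>2 / (4 * \<rho>)"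
    "0 \<le> M" "M < S / (2 * \<rho>)" "r \<ge> S * M - \<rho> * M\<^sup>2"
  shows "M < 2 * r0 / S"
proof (rule ccontr)
  assume "\<not> M < 2 * r0 / S"
  then have MN: "M \<ge> 2 * r0 / S" by simp
  define N where "N = 2 * r0 / S"
  have SN: "S * N = 2 * r0" using assms(1) by (simp add: N_def)
  have hN: "S * N - \<rho> * N\<^sup>2 = 2 * r0 - 4 * \<rho> * r0\<^sup>2 / S\<^sup>2"
    using assms(1) unfolding N_def power2_eq_square by (simp add: divide_simps)
  have a5: "4 * \<rho> * r0 < S\<^sup>2" using assms(5) assms(2) by (simp add: pos_less_divide_eq mult.commute)
  have "2 * \<rho> * (S * N) < S * S" using a5 SN by (simp add: power2_eq_square algebra_simps)
  then have "2 * \<rho> * N < S" using assms(1) by (simp add: algebra_simps)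
  moreover have "2 * \<rho> * M < S" using assms(7) assms(2) by (simp add: pos_less_divide_eq mult.commute)
  ultimately have "\<rho> * (M + N) < S" by (simp add: algebra_simps)
  moreover have "M - N \<ge> 0" using MN N_def by simp
  ultimately have "(M - N) * (S - \<rho> * (M + N)) \<ge> 0" by simp
  then have "S * M - \<rho> * M\<^sup>2 \<ge> S * N - \<rho> * N\<^sup>2" by (simp add: power2_eq_square algebra_simps)
  then show False using hN assms(4,8) by linarith
qed

lemma dist2_deriv:
  fixes X :: "real \<Rightarrow> 'a::euclidean_space"
  assumes "(X has_vector_derivative X') (at s)"
  shows "((\<lambda>s. (norm (X s - p))\<^sup>2) has_real_derivative (2 * ((X s - p) \<bullet> X'))) (at s)"
proof -
  have D: "((\<lambda>s. (X s - p) \<bullet> (X s - p)) has_derivative (\<lambda>h. (X s - p) \<bullet> (h *\<^sub>R X') + (h *\<^sub>R X') \<bullet> (X s - p))) (at s)"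
    using assms by (intro has_derivative_inner derivative_eq_intros) (auto simp: has_vector_derivative_def)
  have e: "(\<lambda>h. (X s - p) \<bullet> (h *\<^sub>R X') + (h *\<^sub>R X') \<bullet> (X s - p)) = (*) (2 * ((X s - p) \<bullet> X'))"
    by (auto simp: fun_eq_iff inner_commute algebra_simps)
  show ?thesis
    unfolding has_field_derivative_def power2_norm_eq_inner using D by (simp only: e)
qed

definition rep :: "real \<Rightarrow> real \<Rightarrow> real" where "rep L t = t - L * of_int \<lfloor>t / L\<rfloor>"

lemma rep_bounds: "L > 0 \<Longrightarrow> 0 \<le> rep L t \<and> rep L t < L"
proof -
  assume L: "L > 0"
  have "L * of_int \<lfloor>t / L\<rfloor> \<le> t" "t < L * of_int \<lfloor>t / L\<rfloor> + L"
    using floor_divide_lower[OF L, of t] floor_divide_upper[OF L, of t] by (simp_all add: algebra_simps)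
  then show ?thesis by (simp add: rep_def)
qed

lemma rep_eq: "rep L t = t + real_of_int (- \<lfloor>t / L\<rfloor>) * L"
  by (simp add: rep_def)

lemma per_rep: "\<forall>t. f (t + L) = f t \<Longrightarrow> f (rep L t) = f t"
  unfolding rep_eq by (rule per_int)




definition shft :: "real \<Rightarrow> real \<Rightarrow> int \<Rightarrow> int \<Rightarrow> real \<times> real \<Rightarrow> real \<times> real" where
  "shft L1 L2 k l z = (fst z + of_int k * L1, snd z + of_int l * L2)"

lemma dist_shft: "dist (shft L1 L2 k l x) (shft L1 L2 k l y) = dist x y"
  by (simp add: shft_def dist_prod_def dist_real_def)

lemma shft_inv: "shft L1 L2 (-k) (-l) (shft L1 L2 k l z) = z"
  by (simp add: shft_def)

lemma min_in_component:
  fixes F :: "real \<times> real \<Rightarrow> real" and G :: "(real \<times> real) set"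
  assumes contF: "continuous_on UNIV F" and L1: "L1 > 0" and L2: "L2 > 0"
    and Fper: "\<And>z k l. F (shft L1 L2 k l z) = F z"
    and Gper: "\<And>z k l. z \<in> G \<Longrightarrow> shft L1 L2 k l z \<in> G"
    and clG: "closed G" and z0: "z0 \<in> G" and Fz0: "F z0 < thr"
    and opn: "\<And>z. z \<in> G \<Longrightarrow> F z < thr \<Longrightarrow> \<exists>e>0. ball z e \<subseteq> G"
  shows "\<exists>z \<in> connected_component_set G z0. (\<forall>y \<in> connected_component_set G z0. F z \<le> F y)
           \<and> (\<exists>e>0. ball z e \<subseteq> connected_component_set G z0)"
proof -
  define C where "C = connected_component_set G z0"
  define P where "P z = shft L1 L2 (- \<lfloor>fst z / L1\<rfloor>) (- \<lfloor>snd z / L2\<rfloor>) z" for z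
  have P_eq: "P z = (rep L1 (fst z), rep L2 (snd z))" for z
    by (simp add: P_def shft_def rep_eq)
  have P_back: "z = shft L1 L2 (\<lfloor>fst z / L1\<rfloor>) (\<lfloor>snd z / L2\<rfloor>) (P z)" for z
    by (simp add: P_def shft_def)
  have FP: "F (P z) = F z" for z by (simp add: P_def Fper)
  have CG: "C \<subseteq> G" by (simp add: C_def connected_component_subset)
  define A where "A = P ` C"
  have AG: "A \<subseteq> G" using CG Gper by (auto simp: A_def P_def)
  have Abox: "A \<subseteq> {0..L1} \<times> {0..L2}"
  proof
    fix x assume "x \<in> A"
    then obtain w where "x = P w" by (auto simp: A_def)
    then show "x \<in> {0..L1} \<times> {0..L2}"
      using rep_bounds[OF L1, of "fst w"] rep_bounds[OF L2, of "snd w"] by (simp add: P_eq)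
  qed
  have "bounded A" by (rule bounded_subset[OF bounded_Times[OF bounded_closed_interval bounded_closed_interval] Abox])
  then have cA: "compact (closure A)" by simp
  have z0C: "z0 \<in> C" using z0 by (simp add: C_def)
  then have "P z0 \<in> A" by (simp add: A_def)
  then have neA: "closure A \<noteq> {}" using closure_subset[of A] by blast
  obtain zs where zs: "zs \<in> closure A" and zmin: "\<And>y. y \<in> closure A \<Longrightarrow> F zs \<le> F y"
    using continuous_attains_inf[OF cA neA continuous_on_subset[OF contF]] by blast
  have zsG: "zs \<in> G" using zs closure_minimal[OF AG clG] by blast
  have "P z0 \<in> closure A" using subsetD[OF closure_subset[of A] \<open>P z0 \<in> A\<close>] .
  then have "F zs \<le> F z0" using zmin[of "P z0"] FP[of z0] by simp
  then have "F zs < thr" using Fz0 by simp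
  then obtain e where e: "e > 0" "ball zs e \<subseteq> G" using opn zsG by blast
  obtain y where yA: "y \<in> A" and dy: "dist y zs < e"
    using closure_approachable[THEN iffD1, OF zs, rule_format, OF e(1)] by blast
  obtain c where cC: "c \<in> C" and yc: "y = P c" using yA by (auto simp: A_def)
  define k where "k = \<lfloor>fst c / L1\<rfloor>"
  define l where "l = \<lfloor>snd c / L2\<rfloor>"
  have c_eq: "c = shft L1 L2 k l y" using P_back[of c] by (simp add: yc k_def l_def)
  define z where "z = shft L1 L2 k l zs"
  have ballG: "ball z e \<subseteq> G"
  proof
    fix x assume "x \<in> ball z e"
    then have "dist z x < e" by simp
    then have "dist zs (shft L1 L2 (-k) (-l) x) < e"
      using dist_shft[of L1 L2 "-k" "-l" z x] by (simp add: z_def shft_inv)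
    then have "shft L1 L2 (-k) (-l) x \<in> G" using e by auto
    then have "shft L1 L2 k l (shft L1 L2 (-k) (-l) x) \<in> G" by (rule Gper)
    then show "x \<in> G" using shft_inv[of L1 L2 "-k" "-l" x] by simp
  qed
  have cball: "c \<in> ball z e"
    using dy dist_shft[of L1 L2 k l zs y] by (simp add: z_def c_eq dist_commute)
  have "ball z e \<subseteq> connected_component_set G c"
    by (rule connected_component_maximal[OF cball connected_ball ballG])
  also have "\<dots> = C" using cC by (simp add: C_def connected_component_eq)
  finally have ballC: "ball z e \<subseteq> C" .
  have zC: "z \<in> C" using ballC e(1) by auto
  have "F z \<le> F x" if "x \<in> C" for x
  proof -
    have "P x \<in> closure A" using that closure_subset[of A] by (auto simp: A_def)
    then have "F zs \<le> F (P x)" by (rule zmin)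
    then show ?thesis by (simp add: z_def Fper FP)
  qed
  then show ?thesis using zC ballC e(1) unfolding C_def by blast
qed



definition gcurve :: "(real \<Rightarrow> 'a::euclidean_space) \<Rightarrow> (real \<Rightarrow> 'a) \<Rightarrow> (real \<Rightarrow> 'a) \<Rightarrow> real \<Rightarrow> real \<Rightarrow> bool" where
  "gcurve c c' c'' L \<rho> \<longleftrightarrow> L > 0 \<and> \<rho> > 0 \<and> (\<forall>t. c (t + L) = c t) \<and> (\<forall>t. c' (t + L) = c' t)
     \<and> (\<forall>t. (c has_vector_derivative c' t) (at t)) \<and> (\<forall>t. (c' has_vector_derivative c'' t) (at t))
     \<and> (\<forall>t. norm (c' t) = 1) \<and> (\<forall>t. norm (c'' t) \<le> \<rho>)"

lemma gc_of:
  assumes curves: "curve_system I L \<gamma> \<gamma>' \<gamma>''" and rho: "\<rho> > 0"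
    and sff: "\<forall>p\<in>pts I L. sff_norm \<gamma>' \<gamma>'' p \<le> \<rho>" and i: "i \<in> I"
  shows "gcurve (\<gamma> i) (\<gamma>' i) (\<gamma>'' i) (L i) \<rho>"
proof -
  have L: "L i > 0" and per: "\<forall>t. \<gamma> i (t + L i) = \<gamma> i t"
    and d1: "\<forall>t. (\<gamma> i has_vector_derivative \<gamma>' i t) (at t)"
    and d2: "\<forall>t. (\<gamma>' i has_vector_derivative \<gamma>'' i t) (at t)"
    and u: "\<forall>t. norm (\<gamma>' i t) = 1"
    using curves i by (auto simp: curve_system_def)
  have per1: "\<forall>t. \<gamma>' i (t + L i) = \<gamma>' i t" using per_deriv[OF per d1] by blast
  have per2: "\<forall>t. \<gamma>'' i (t + L i) = \<gamma>'' i t" using per_deriv[OF per1 d2] by blast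
  have "norm (\<gamma>'' i t) \<le> \<rho>" for t
  proof -
    have "(i, rep (L i) t) \<in> pts I L" using i rep_bounds[OF L] by (simp add: pts_def)
    then have "sff_norm \<gamma>' \<gamma>'' (i, rep (L i) t) \<le> \<rho>" using sff by blast
    moreover have "\<gamma>'' i (rep (L i) t) = \<gamma>'' i t" "\<gamma>' i (rep (L i) t) = \<gamma>' i t"
      using per_rep[OF per2] per_rep[OF per1] by auto
    ultimately show ?thesis using orth_dd[OF d2 u, of t] by (simp add: sff_norm_def upt_def)
  qed
  then show ?thesis using L rho per per1 d1 d2 u by (simp add: gcurve_def)
qed

lemma cross_lb:
  fixes X Y :: "real \<Rightarrow> 'a::euclidean_space"
  assumes gX: "gcurve X X' X'' L1 \<rho>" and gY: "gcurve Y Y' Y'' L2 \<rho>"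
    and cr: "X sc = Y tc" and ang: "\<bar>X' sc \<bullet> Y' tc\<bar> \<le> cos th" and sn: "0 \<le> sin th"
  shows "norm (X u - Y v) \<ge> sin th * max \<bar>u - sc\<bar> \<bar>v - tc\<bar> - \<rho> * (max \<bar>u - sc\<bar> \<bar>v - tc\<bar>)\<^sup>2"
proof -
  define h1 where "h1 = u - sc"
  define h2 where "h2 = v - tc"
  define M where "M = max \<bar>h1\<bar> \<bar>h2\<bar>"
  have e1: "norm (X (sc + h1) - X sc - h1 *\<^sub>R X' sc) \<le> \<rho> * h1\<^sup>2 / 2"
    using gX by (intro taylor_vec) (auto simp: gcurve_def)
  have e2: "norm (Y (tc + h2) - Y tc - h2 *\<^sub>R Y' tc) \<le> \<rho> * h2\<^sup>2 / 2"
    using gY by (intro taylor_vec) (auto simp: gcurve_def)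
  have uX: "norm (X' sc) = 1" and uY: "norm (Y' tc) = 1" using gX gY by (auto simp: gcurve_def)
  have a1: "norm (h1 *\<^sub>R X' sc - h2 *\<^sub>R Y' tc) \<ge> sin th * \<bar>h1\<bar>"
    by (rule angle_lb[OF uX uY ang sn])
  have a2: "norm (h2 *\<^sub>R Y' tc - h1 *\<^sub>R X' sc) \<ge> sin th * \<bar>h2\<bar>"
    using ang by (intro angle_lb[OF uY uX _ sn]) (simp add: inner_commute)
  have a3: "norm (h1 *\<^sub>R X' sc - h2 *\<^sub>R Y' tc) \<ge> sin th * M"
    using a1 a2 by (simp add: M_def norm_minus_commute max_def)
  define A where "A = h1 *\<^sub>R X' sc - h2 *\<^sub>R Y' tc"
  define E1 where "E1 = X (sc + h1) - X sc - h1 *\<^sub>R X' sc"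
  define E2 where "E2 = Y (tc + h2) - Y tc - h2 *\<^sub>R Y' tc"
  have eqA: "X u - Y v = A + (E1 - E2)"
    using cr by (simp add: A_def E1_def E2_def h1_def h2_def algebra_simps)
  have n1: "norm A - norm (E1 - E2) \<le> norm (A + (E1 - E2))" by (rule norm_diff_ineq)
  have n2: "norm (E1 - E2) \<le> norm E1 + norm E2" by (rule norm_triangle_ineq4)
  have tri: "norm (X u - Y v) \<ge> norm A - norm E1 - norm E2" unfolding eqA using n1 n2 by linarith
  have rho: "\<rho> > 0" using gX by (simp add: gcurve_def)
  have "\<bar>h1\<bar>\<^sup>2 \<le> M\<^sup>2" "\<bar>h2\<bar>\<^sup>2 \<le> M\<^sup>2" unfolding M_def
    by (intro power_mono; simp)+
  then have "\<rho> * h1\<^sup>2 \<le> \<rho> * M\<^sup>2" "\<rho> * h2\<^sup>2 \<le> \<rho> * M\<^sup>2"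
    using rho by (simp_all add: mult_left_mono)
  moreover have mm: "max \<bar>u - sc\<bar> \<bar>v - tc\<bar> = M" by (simp add: M_def h1_def h2_def)
  ultimately show ?thesis using tri a3 e1 e2 unfolding A_def E1_def E2_def mm by linarith
qed


lemma band_arith:
  fixes \<rho> x :: real
  assumes "\<rho> > 0" "1 / (2 * \<rho>) \<le> x" "x \<le> 1 / \<rho>"
  shows "x - \<rho> * x\<^sup>2 / 2 \<ge> 3 / (8 * \<rho>)"
proof -
  have a: "1 \<le> 2 * \<rho> * x" using assms by (simp add: field_simps)
  have b: "\<rho> * x \<le> 1" using assms by (simp add: field_simps)
  have "(2 * \<rho> * x - 1) * (3 - 2 * \<rho> * x) \<ge> 0" using a b by (intro mult_nonneg_nonneg) auto
  then have "8 * \<rho> * x - 4 * \<rho>\<^sup>2 * x\<^sup>2 - 3 \<ge> 0" by (simp add: power2_eq_square algebra_simps)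
  then have "3 \<le> 8 * \<rho> * (x - \<rho> * x\<^sup>2 / 2)" by (simp add: power2_eq_square algebra_simps)
  then show ?thesis using assms(1) by (simp add: field_simps)
qed

lemma gc_parts:
  assumes "gcurve c c' c'' L \<rho>"
  shows "L > 0" "\<rho> > 0" "\<forall>t. c (t + L) = c t" "\<forall>t. c' (t + L) = c' t"
     "\<forall>t. (c has_vector_derivative c' t) (at t)" "\<forall>t. (c' has_vector_derivative c'' t) (at t)"
     "\<forall>t. norm (c' t) = 1" "\<forall>t. norm (c'' t) \<le> \<rho>"
  using assms by (simp_all add: gcurve_def)

lemma gc_chord:
  assumes g: "gcurve c c' c'' L \<rho>"
  shows "\<bar>(c (s + h) - c s) \<bullet> c' s\<bar> \<ge> \<bar>h\<bar> - \<rho> * h\<^sup>2 / 2"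
  using chord[OF gc_parts(5,6,8,7)[OF g]] by blast

lemma band:
  assumes g: "gcurve c c' c'' L \<rho>" and h: "1 / (2 * \<rho>) \<le> \<bar>h\<bar>" "\<bar>h\<bar> \<le> 1 / \<rho>"
  shows "norm (c (s + h) - c s) \<ge> 3 / (8 * \<rho>)"
proof -
  have "\<bar>(c (s + h) - c s) \<bullet> c' s\<bar> \<le> norm (c (s + h) - c s) * norm (c' s)"
    by (rule Cauchy_Schwarz_ineq2)
  then have "\<bar>(c (s + h) - c s) \<bullet> c' s\<bar> \<le> norm (c (s + h) - c s)" using gc_parts(7)[OF g] by simp
  moreover have "\<bar>h\<bar> - \<rho> * \<bar>h\<bar>\<^sup>2 / 2 \<ge> 3 / (8 * \<rho>)" using band_arith[OF gc_parts(2)[OF g] h] .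
  ultimately show ?thesis using gc_chord[OF g, where s=s and h=h] by simp
qed

lemma foot_near:
  assumes g: "gcurve c c' c'' L \<rho>" and perp: "(c (s + h) - c s) \<bullet> c' s = 0"
    and h: "h \<noteq> 0" "\<bar>h\<bar> < 2 / \<rho>"
  shows False
proof -
  have r: "\<rho> > 0" using gc_parts(2)[OF g] .
  have "\<rho> * \<bar>h\<bar> < 2" using h r by (simp add: field_simps)
  then have "\<bar>h\<bar> * (\<rho> * \<bar>h\<bar>) < \<bar>h\<bar> * 2" using h by simp
  then have "\<bar>h\<bar> - \<rho> * h\<^sup>2 / 2 > 0" by (simp add: power2_eq_square algebra_simps)
  then show False using gc_chord[OF g, where s=s and h=h] perp by simp
qed

lemma gc_cont: "gcurve c c' c'' L \<rho> \<Longrightarrow> continuous_on UNIV c"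
  using gc_parts(5) by (metis continuous_at_imp_continuous_on has_vector_derivative_continuous)

lemma farthest:
  assumes g: "gcurve c c' c'' L \<rho>"
  shows "\<exists>t. (c a - c t) \<bullet> c' t = 0 \<and> c t \<noteq> c a"
proof -
  have L: "L > 0" and r: "\<rho> > 0" using gc_parts[OF g] by auto
  define \<phi> where "\<phi> t = (norm (c t - c a))\<^sup>2" for t
  have "continuous_on {0..L} \<phi>" unfolding \<phi>_def
    by (intro continuous_intros continuous_on_subset[OF gc_cont[OF g]]) auto
  then obtain ts where ts: "ts \<in> {0..L}" and mx: "\<And>y. y \<in> {0..L} \<Longrightarrow> \<phi> y \<le> \<phi> ts"
    using continuous_attains_sup[of "{0..L}" \<phi>] L by auto
  have mxall: "\<phi> y \<le> \<phi> ts" for y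
  proof -
    have "\<phi> (rep L y) = \<phi> y" unfolding \<phi>_def using per_rep[OF gc_parts(3)[OF g]] by simp
    moreover have "rep L y \<in> {0..L}" using rep_bounds[OF L, of y] by simp
    ultimately show ?thesis using mx[of "rep L y"] by simp
  qed
  have D: "(\<phi> has_real_derivative (2 * ((c ts - c a) \<bullet> c' ts))) (at ts)"
    unfolding \<phi>_def by (rule dist2_deriv[OF gc_parts(5)[OF g, rule_format]])
  have z: "2 * ((c ts - c a) \<bullet> c' ts) = 0"
    by (rule DERIV_local_max[OF D zero_less_one]) (simp add: mxall)
  have "norm (c (a + 1 / (2 * \<rho>)) - c a) \<ge> 3 / (8 * \<rho>)"
    by (rule band[OF g]) (use r in \<open>simp_all add: field_simps\<close>)
  moreover have "3 / (8 * \<rho>) > 0" using r by simp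
  ultimately have "norm (c (a + 1 / (2 * \<rho>)) - c a) > 0" by linarith
  then have "\<phi> (a + 1 / (2 * \<rho>)) > 0" unfolding \<phi>_def by simp
  then have "\<phi> ts > 0" using mxall[of "a + 1 / (2 * \<rho>)"] by linarith
  then have "c ts \<noteq> c a" by (auto simp: \<phi>_def)
  moreover have "(c a - c ts) \<bullet> c' ts = 0" using z by (simp add: inner_diff_left)
  ultimately show ?thesis by blast
qed

lemma perp_tline: "(\<forall>v\<in>tline \<gamma>' q. w \<bullet> v = 0) \<longleftrightarrow> w \<bullet> upt \<gamma>' q = 0"
  by (auto simp: tline_def upt_def span_singleton)

lemma upt_rep:
  assumes "gcurve (\<gamma> k) (\<gamma>' k) (\<gamma>'' k) (L k) \<rho>"
  shows "upt \<gamma> (k, rep (L k) t) = \<gamma> k t" "upt \<gamma>' (k, rep (L k) t) = \<gamma>' k t"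
  using per_rep[OF gc_parts(3)[OF assms]] per_rep[OF gc_parts(4)[OF assms]] by (auto simp: upt_def)

lemma rep_pts: "k \<in> I \<Longrightarrow> L k > 0 \<Longrightarrow> (k, rep (L k) t) \<in> pts I L"
  using rep_bounds by (simp add: pts_def)



theorem lemma2p15:
  fixes I :: "'i set" and L :: "'i \<Rightarrow> real"
    and \<gamma> \<gamma>' \<gamma>'' :: "'i \<Rightarrow> real \<Rightarrow> 'a::euclidean_space"
    and \<rho> fmin fmax :: real and f :: "'i \<times> real \<Rightarrow> real" and x0 :: "'i \<times> real"
  assumes curves: "curve_system I L \<gamma> \<gamma>' \<gamma>''"
    and transversal: "\<forall>(p,q)\<in>C0set I L \<gamma>. tline \<gamma>' p \<noteq> tline \<gamma>' q"
    and rho_pos: "\<rho> > 0"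
    and sff: "\<forall>p\<in>pts I L. sff_norm \<gamma>' \<gamma>'' p \<le> \<rho>"
    and dens_int: "\<forall>i\<in>I. (\<lambda>s. f (i,s)) integrable_on {0..L i}"
    and dens_prob: "(\<Sum>i\<in>I. integral {0..L i} (\<lambda>s. f (i,s))) = 1"
    and dens_lip: "\<exists>K. \<forall>p\<in>pts I L. \<forall>q\<in>pts I L. \<forall>d. gdist L p q = ereal d \<longrightarrow> \<bar>f p - f q\<bar> \<le> K * d"
    and dens_bounds: "0 < fmin" "fmin \<le> fmax" "\<forall>p\<in>pts I L. fmin \<le> f p \<and> f p \<le> fmax"
    and x0: "x0 \<in> pts I L"
    and small: "ereal (normal_reach I L \<gamma> \<gamma>' x0)
                  < min (Delta I L \<gamma> \<gamma>') (ereal (sin (Theta I L \<gamma> \<gamma>') ^ 2 / (4 * \<rho>)))"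
  shows "\<exists>xs\<in>pts I L. normal_reach I L \<gamma> \<gamma>' xs = 0
           \<and> gdist L x0 xs \<le> ereal (2 / sin (Theta I L \<gamma> \<gamma>') * normal_reach I L \<gamma> \<gamma>' x0)"
proof -
  obtain i a where x0eq: "x0 = (i, a)" by (cases x0)
  have iI: "i \<in> I" and a0: "0 \<le> a" and aL: "a < L i" using x0 by (auto simp: pts_def x0eq)
  have gc: "\<And>k. k \<in> I \<Longrightarrow> gcurve (\<gamma> k) (\<gamma>' k) (\<gamma>'' k) (L k) \<rho>"
    using gc_of[OF curves rho_pos sff] by blast
  have uptk: "\<And>k t. k \<in> I \<Longrightarrow> upt \<gamma> (k, rep (L k) t) = \<gamma> k t \<and> upt \<gamma>' (k, rep (L k) t) = \<gamma>' k t"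
    using upt_rep[where \<gamma>=\<gamma> and \<gamma>'=\<gamma>' and \<gamma>''=\<gamma>'' and L=L and \<rho>=\<rho>] gc by blast
  have ptsk: "\<And>k t. k \<in> I \<Longrightarrow> (k, rep (L k) t) \<in> pts I L"
    using rep_pts[where L=L and I=I] gc gc_parts(1) by blast
  have unit: "\<And>p. p \<in> pts I L \<Longrightarrow> norm (upt \<gamma>' p) = 1"
    using curves by (auto simp: pts_def curve_system_def upt_def)
  define Th where "Th = Theta I L \<gamma> \<gamma>'"
  define S where "S = sin Th"
  define r0 where "r0 = normal_reach I L \<gamma> \<gamma>' x0"
  define AS where "AS = insert (pi/2) ((\<lambda>(p,q). line_angle \<gamma>' p q) ` C0set I L \<gamma>)"
  have Th_AS: "Th = Inf AS" by (simp add: Th_def Theta_def AS_def)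
  have abs1: "\<bar>upt \<gamma>' p \<bullet> upt \<gamma>' q\<bar> \<le> 1" if "(p, q) \<in> C0set I L \<gamma>" for p q
  proof -
    have "p \<in> pts I L" "q \<in> pts I L" using that by (auto simp: C0set_def)
    then show ?thesis using unit Cauchy_Schwarz_ineq2[of "upt \<gamma>' p" "upt \<gamma>' q"] by simp
  qed
  have AS_nonneg: "0 \<le> x" if "x \<in> AS" for x
  proof -
    have "x = pi/2 \<or> (\<exists>pq\<in>C0set I L \<gamma>. x = (\<lambda>(p,q). line_angle \<gamma>' p q) pq)"
      using that unfolding AS_def by blast
    then show "0 \<le> x"
    proof
      assume "x = pi/2" then show ?thesis using pi_gt_zero by linarith
    next
      assume "\<exists>pq\<in>C0set I L \<gamma>. x = (\<lambda>(p,q). line_angle \<gamma>' p q) pq"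
      then obtain p q where pq: "(p,q) \<in> C0set I L \<gamma>" "x = line_angle \<gamma>' p q" by auto
      then show ?thesis using abs1[OF pq(1)] by (simp add: line_angle_def arccos_lbound)
    qed
  qed
  have bddAS: "bdd_below AS" using AS_nonneg by (intro bdd_belowI) 
  have ASne: "AS \<noteq> {}" by (simp add: AS_def)
  have Th0: "0 \<le> Th" unfolding Th_AS by (rule cInf_greatest[OF ASne AS_nonneg])
  have "pi/2 \<in> AS" by (simp add: AS_def)
  then have Th2: "Th \<le> pi/2" unfolding Th_AS using bddAS by (rule cInf_lower)
  have Th_le: "Th \<le> line_angle \<gamma>' p q" if "(p,q) \<in> C0set I L \<gamma>" for p q
  proof -
    have "line_angle \<gamma>' p q \<in> AS" unfolding AS_def
      by (rule insertI2, rule image_eqI[where x="(p,q)"]) (use that in simp_all)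
    then show ?thesis unfolding Th_AS using bddAS by (rule cInf_lower)
  qed
  have S0: "0 \<le> S" using Th0 Th2 by (simp add: S_def sin_ge_zero)
  have angle_cos: "\<bar>upt \<gamma>' p \<bullet> upt \<gamma>' q\<bar> \<le> cos Th" if "(p,q) \<in> C0set I L \<gamma>" for p q
  proof -
    define c where "c = \<bar>upt \<gamma>' p \<bullet> upt \<gamma>' q\<bar>"
    have c1: "-1 \<le> c" "c \<le> 1" using abs1[OF that] by (simp_all add: c_def)
    have "Th \<le> arccos c" using Th_le[OF that] by (simp add: line_angle_def c_def)
    moreover have "arccos c \<le> pi" using c1 by (rule arccos_ubound)
    ultimately have "cos (arccos c) \<le> cos Th" using Th0 by (intro cos_monotone_0_pi_le) auto
    then show ?thesis using c1 by (simp add: cos_arccos c_def)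
  qed
  show ?thesis
  proof (cases "r0 = 0")
    case True
    define K where "K = {\<bar>snd x0 - snd x0 + real_of_int k * L (fst x0)\<bar> | k. True}"
    have "0 \<in> K" unfolding K_def by (rule CollectI, rule exI[of _ 0]) simp
    moreover have "bdd_below K" unfolding K_def by (intro bdd_belowI[of _ 0]) auto
    ultimately have "Inf K \<le> 0" by (rule cInf_lower)
    then have "gdist L x0 x0 \<le> ereal (2 / S * r0)" using True by (simp add: gdist_def K_def)
    then show ?thesis using x0 True by (auto simp: r0_def S_def Th_def)
  next
    case False
    have gi: "gcurve (\<gamma> i) (\<gamma>' i) (\<gamma>'' i) (L i) \<rho>" using gc[OF iI] .
    have Li: "L i > 0" using gc_parts(1)[OF gi] .
    have x0u: "upt \<gamma> x0 = \<gamma> i a" by (simp add: x0eq upt_def)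
    obtain tf where tf: "(\<gamma> i a - \<gamma> i tf) \<bullet> \<gamma>' i tf = 0" "\<gamma> i tf \<noteq> \<gamma> i a"
      using farthest[OF gi] by blast
    define FS where "FS = {norm (upt \<gamma> x0 - upt \<gamma> q) | q. q \<in> pts I L \<and> q \<noteq> x0
                        \<and> (\<forall>v\<in>tline \<gamma>' q. (upt \<gamma> x0 - upt \<gamma> q) \<bullet> v = 0)}"
    have r0FS: "r0 = Inf FS" by (simp add: r0_def normal_reach_def FS_def)
    have "norm (upt \<gamma> x0 - upt \<gamma> (i, rep (L i) tf)) \<in> FS"
    proof -
      have "(i, rep (L i) tf) \<in> pts I L" by (rule ptsk[OF iI])
      moreover have "(i, rep (L i) tf) \<noteq> x0"
        using tf(2) uptk[OF iI, of tf] x0u by auto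
      moreover have "\<forall>v\<in>tline \<gamma>' (i, rep (L i) tf). (upt \<gamma> x0 - upt \<gamma> (i, rep (L i) tf)) \<bullet> v = 0"
        unfolding perp_tline using uptk[OF iI, of tf] x0u tf(1) by simp
      ultimately show ?thesis unfolding FS_def by blast
    qed
    then have FSne: "FS \<noteq> {}" by blast
    have FSbdd: "bdd_below FS" unfolding FS_def by (intro bdd_belowI[of _ 0]) auto
    have r0ge: "0 \<le> r0" unfolding r0FS by (rule cInf_greatest[OF FSne]) (auto simp: FS_def)
    have r0pos: "0 < r0" using r0ge False by simp
    have sm1: "ereal r0 < Delta I L \<gamma> \<gamma>'" and sm2: "r0 < S\<^sup>2 / (4 * \<rho>)"
      using small by (simp_all add: r0_def S_def Th_def)
    have "S\<^sup>2 / (4 * \<rho>) > 0" using sm2 r0pos by linarith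
    then have "S \<noteq> 0" by auto
    then have Spos: "S > 0" using S0 by simp
    obtain D' where D'1: "ereal r0 < ereal D'" and D'2: "ereal D' < Delta I L \<gamma> \<gamma>'"
      using ereal_dense2[OF sm1] by blast
    have r0D: "r0 < D'" using D'1 by simp
    have a5: "4 * \<rho> * r0 < S\<^sup>2" using sm2 rho_pos by (simp add: pos_less_divide_eq mult.commute)
    have "4 * \<rho> * r0\<^sup>2 / S\<^sup>2 < r0"
    proof -
      have "r0 * (4 * \<rho> * r0) < r0 * S\<^sup>2" using a5 r0pos by (rule mult_strict_left_mono)
      then show ?thesis using Spos by (simp add: pos_divide_less_eq power2_eq_square algebra_simps)
    qed
    then have r0q: "r0 < 2 * r0 - 4 * \<rho> * r0\<^sup>2 / S\<^sup>2" by linarith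
    define r1 where "r1 = min D' (min (S\<^sup>2 / (4 * \<rho>)) (2 * r0 - 4 * \<rho> * r0\<^sup>2 / S\<^sup>2))"
    have r01: "r0 < r1" using r0D sm2 r0q by (simp add: r1_def)
    obtain q where qF: "q \<in> pts I L" "q \<noteq> x0" "\<forall>v\<in>tline \<gamma>' q. (upt \<gamma> x0 - upt \<gamma> q) \<bullet> v = 0"
      and qlt: "norm (upt \<gamma> x0 - upt \<gamma> q) < r1"
    proof -
      have "Inf FS < r1" using r01 r0FS by simp
      then obtain y where "y \<in> FS" "y < r1" using cInf_lessD[OF FSne] by blast
      then show ?thesis using that unfolding FS_def by blast
    qed
    obtain j b where qeq: "q = (j, b)" by (cases q)
    have jI: "j \<in> I" and b0: "0 \<le> b" and bL: "b < L j" using qF(1) by (auto simp: pts_def qeq)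
    have gj: "gcurve (\<gamma> j) (\<gamma>' j) (\<gamma>'' j) (L j) \<rho>" using gc[OF jI] .
    have Lj: "L j > 0" using gc_parts(1)[OF gj] .
    define r where "r = norm (\<gamma> i a - \<gamma> j b)"
    have "r \<in> FS" unfolding FS_def r_def using qF by (auto simp: qeq x0eq upt_def)
    then have r0r: "r0 \<le> r" unfolding r0FS using FSbdd by (rule cInf_lower)
    have rr1: "r < r1" using qlt by (simp add: r_def qeq x0eq upt_def)
    have perp0: "(\<gamma> i a - \<gamma> j b) \<bullet> \<gamma>' j b = 0"
      using qF(3) unfolding perp_tline by (simp add: qeq x0eq upt_def)
    have rpos: "r > 0" using r0r r0pos by linarith
    define r' where "r' = (r + r1) / 2"
    have rr': "r < r'" "r' < r1" using rr1 by (simp_all add: r'_def)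
    have r'S: "r' < S\<^sup>2 / (4 * \<rho>)" using rr' by (simp add: r1_def)
    define \<delta> where "\<delta> = 1 / (2 * \<rho>)"
    have \<delta>pos: "\<delta> > 0" using rho_pos by (simp add: \<delta>_def)
    define B where "B = S / (2 * \<rho>)"
    define F where "F z = (norm (\<gamma> i (fst z) - \<gamma> j (snd z)))\<^sup>2" for z :: "real \<times> real"
    define G where "G = {z. F z \<le> r'\<^sup>2 \<and> (i = j \<longrightarrow> (\<forall>k::int. \<delta> \<le> \<bar>fst z - snd z - of_int k * L i\<bar>))}"
    have ci: "continuous_on UNIV (\<lambda>z::real\<times>real. \<gamma> i (fst z))"
      using continuous_on_compose2[OF gc_cont[OF gi] continuous_on_fst[OF continuous_on_id]] by simp
    have cj: "continuous_on UNIV (\<lambda>z::real\<times>real. \<gamma> j (snd z))"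
      using continuous_on_compose2[OF gc_cont[OF gj] continuous_on_snd[OF continuous_on_id]] by simp
    have contF: "continuous_on UNIV F" unfolding F_def
      by (intro continuous_intros ci cj)
    have peri: "\<gamma> i (x + real_of_int k * L i) = \<gamma> i x" for x k
      by (rule per_int[OF gc_parts(3)[OF gi]])
    have perj: "\<gamma> j (x + real_of_int k * L j) = \<gamma> j x" for x k
      by (rule per_int[OF gc_parts(3)[OF gj]])
    have Fper: "F (shft (L i) (L j) k l z) = F z" for z k l
      by (simp add: F_def shft_def peri perj)
    have Gper: "shft (L i) (L j) k l z \<in> G" if "z \<in> G" for z k l
    proof -
      have "F (shft (L i) (L j) k l z) \<le> r'\<^sup>2" using that Fper by (simp add: G_def)
      moreover have "\<delta> \<le> \<bar>fst (shft (L i) (L j) k l z) - snd (shft (L i) (L j) k l z) - of_int m * L i\<bar>"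
        if ij: "i = j" for m :: int
      proof -
        have "\<forall>k::int. \<delta> \<le> \<bar>fst z - snd z - of_int k * L i\<bar>" using \<open>z \<in> G\<close> ij by (simp add: G_def)
        then have "\<delta> \<le> \<bar>fst z - snd z - of_int (m - k + l) * L i\<bar>" by (rule spec)
        moreover have "fst z - snd z - of_int (m - k + l) * L i = fst (shft (L i) (L j) k l z) - snd (shft (L i) (L j) k l z) - of_int m * L i"
          using ij by (simp add: shft_def algebra_simps)
        ultimately show ?thesis by simp
      qed
      ultimately show ?thesis by (simp add: G_def)
    qed
    have clG: "closed G"
    proof -
      have c1: "closed {z. F z \<le> r'\<^sup>2}" using contF by (intro closed_Collect_le continuous_on_const) auto
      show ?thesis
      proof (cases "i = j")
        case True
        have "closed {z::real\<times>real. \<forall>k::int. \<delta> \<le> \<bar>fst z - snd z - of_int k * L i\<bar>}"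
          by (intro closed_Collect_all closed_Collect_le continuous_intros)
        then have "closed ({z. F z \<le> r'\<^sup>2} \<inter> {z::real\<times>real. \<forall>k::int. \<delta> \<le> \<bar>fst z - snd z - of_int k * L i\<bar>})"
          using c1 by (rule closed_Int[rotated])
        moreover have "G = {z. F z \<le> r'\<^sup>2} \<inter> {z::real\<times>real. \<forall>k::int. \<delta> \<le> \<bar>fst z - snd z - of_int k * L i\<bar>}"
          using True by (auto simp: G_def)
        ultimately show ?thesis by simp
      next
        case False
        then have "G = {z. F z \<le> r'\<^sup>2}" by (auto simp: G_def)
        then show ?thesis using c1 by simp
      qed
    qed
    have Fab: "F (a, b) = r\<^sup>2" by (simp add: F_def r_def)
    have r'pos: "r' > 0" using rpos rr' by linarith
    have rsq: "r\<^sup>2 < r'\<^sup>2" using rpos rr' by (simp add: power_strict_mono)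
    have abG: "(a, b) \<in> G"
    proof -
      have "\<delta> \<le> \<bar>a - b - of_int k * L i\<bar>" if ij: "i = j" for k :: int
      proof (rule ccontr)
        assume "\<not> \<delta> \<le> \<bar>a - b - of_int k * L i\<bar>"
        then have hlt: "\<bar>a - b - of_int k * L i\<bar> < \<delta>" by simp
        define h where "h = a - b - of_int k * L i"
        have "\<gamma> i a = \<gamma> i (b + h + real_of_int k * L i)" by (simp add: h_def)
        also have "\<dots> = \<gamma> i (b + h)" by (rule peri)
        finally have ga: "\<gamma> j (b + h) = \<gamma> i a" using ij by simp
        show False
        proof (cases "h = 0")
          case True
          then have "r = 0" using ga by (simp add: r_def)
          then show False using rpos by simp
        next
          case False
          have "\<bar>h\<bar> < 2 / \<rho>" using hlt rho_pos by (simp add: h_def \<delta>_def field_simps)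
          moreover have "(\<gamma> j (b + h) - \<gamma> j b) \<bullet> \<gamma>' j b = 0" using perp0 ga by simp
          ultimately show False using foot_near[OF gj _ False] by blast
        qed
      qed
      then show ?thesis using Fab rsq by (simp add: G_def)
    qed
    have bandG: "2 * \<delta> < \<bar>fst z - snd z - of_int k * L i\<bar>" if "z \<in> G" "i = j" for z k
    proof (rule ccontr)
      assume "\<not> 2 * \<delta> < \<bar>fst z - snd z - of_int k * L i\<bar>"
      moreover have "\<delta> \<le> \<bar>fst z - snd z - of_int k * L i\<bar>" using that by (simp add: G_def)
      ultimately have h1: "1 / (2 * \<rho>) \<le> \<bar>fst z - snd z - of_int k * L i\<bar>"
        and h2: "\<bar>fst z - snd z - of_int k * L i\<bar> \<le> 1 / \<rho>" by (simp_all add: \<delta>_def)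
      have "norm (\<gamma> i ((snd z + of_int k * L i) + (fst z - snd z - of_int k * L i)) - \<gamma> i (snd z + of_int k * L i)) \<ge> 3 / (8 * \<rho>)"
        by (rule band[OF gi h1 h2])
      then have "norm (\<gamma> i (fst z) - \<gamma> j (snd z)) \<ge> 3 / (8 * \<rho>)" using peri that(2) by simp
      moreover have "S \<le> 1" by (simp add: S_def)
      then have "S\<^sup>2 \<le> 1" using S0 by (simp add: power_le_one)
      then have "S\<^sup>2 / (4 * \<rho>) \<le> 1 / (4 * \<rho>)" using rho_pos by (simp add: divide_right_mono)
      moreover have "1 / (4 * \<rho>) < 3 / (8 * \<rho>)" using rho_pos by (simp add: field_simps)
      moreover have "F z \<le> r'\<^sup>2" using that by (simp add: G_def)
      then have "(norm (\<gamma> i (fst z) - \<gamma> j (snd z)))\<^sup>2 \<le> r'\<^sup>2" by (simp add: F_def)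
      then have "norm (\<gamma> i (fst z) - \<gamma> j (snd z)) \<le> r'"
        by (rule power2_le_imp_le[OF _ less_imp_le[OF r'pos]])
      ultimately show False using r'S by linarith
    qed
    have opn: "\<exists>e>0. ball z e \<subseteq> G" if zG: "z \<in> G" and Fz: "F z < r'\<^sup>2" for z
    proof -
      have H: "\<forall>e>0. \<exists>d>0. \<forall>y\<in>UNIV. dist y z < d \<longrightarrow> dist (F y) (F z) < e"
        using contF unfolding continuous_on_iff by (rule bspec) simp
      have pos: "r'\<^sup>2 - F z > 0" using Fz by simp
      from H[rule_format, OF pos] obtain e1 where e1a: "e1 > 0"
        and e1b: "\<forall>y\<in>UNIV. dist y z < e1 \<longrightarrow> dist (F y) (F z) < r'\<^sup>2 - F z" by (elim exE conjE)
      have e1b': "dist (F y) (F z) < r'\<^sup>2 - F z" if "dist y z < e1" for y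
        by (rule e1b[rule_format, OF UNIV_I that])
      note e1 = e1a e1b'
      define e where "e = min e1 (\<delta> / 2)"
      have "ball z e \<subseteq> G"
      proof
        fix y assume "y \<in> ball z e"
        then have dy: "dist y z < e1" "dist y z < \<delta> / 2" by (auto simp: e_def dist_commute)
        have "F y < r'\<^sup>2" using e1(2)[OF dy(1)] by (simp add: dist_real_def)
        moreover have "\<delta> \<le> \<bar>fst y - snd y - of_int k * L i\<bar>" if ij: "i = j" for k :: int
        proof -
          have "\<bar>fst y - fst z\<bar> \<le> dist y z" using dist_fst_le[of y z] by (simp add: dist_real_def)
          moreover have "\<bar>snd y - snd z\<bar> \<le> dist y z" using dist_snd_le[of y z] by (simp add: dist_real_def)
          moreover have "2 * \<delta> < \<bar>fst z - snd z - of_int k * L i\<bar>" by (rule bandG[OF zG ij])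
          ultimately show ?thesis using dy(2) by linarith
        qed
        ultimately show "y \<in> G" by (simp add: G_def)
      qed
      moreover have "e > 0" using e1 \<delta>pos by (simp add: e_def)
      ultimately show ?thesis by blast
    qed
    define C where "C = connected_component_set G (a, b)"
    have Fab': "F (a, b) < r'\<^sup>2" using Fab rsq by simp
    have "\<exists>z\<in>C. (\<forall>y\<in>C. F z \<le> F y) \<and> (\<exists>e>0. ball z e \<subseteq> C)"
      unfolding C_def by (rule min_in_component[OF contF Li Lj Fper Gper clG abG Fab' opn])
    then obtain zs where zsC: "zs \<in> C" and zmin: "\<And>y. y \<in> C \<Longrightarrow> F zs \<le> F y"
      and zball: "\<exists>e>0. ball zs e \<subseteq> C" by blast
    have abC: "(a, b) \<in> C" using abG by (simp add: C_def)
    have CG: "C \<subseteq> G" by (simp add: C_def connected_component_subset)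
    have Fzs: "F zs \<le> r\<^sup>2" using zmin[OF abC] Fab by simp
    obtain s t where zseq: "zs = (s, t)" by (cases zs)
    have pti: "(i, rep (L i) s) \<in> pts I L" by (rule ptsk[OF iI])
    have ptj: "(j, rep (L j) t) \<in> pts I L" by (rule ptsk[OF jI])
    have ui: "upt \<gamma> (i, rep (L i) s) = \<gamma> i s" "upt \<gamma>' (i, rep (L i) s) = \<gamma>' i s"
      using uptk[OF iI, of s] by simp_all
    have uj: "upt \<gamma> (j, rep (L j) t) = \<gamma> j t" "upt \<gamma>' (j, rep (L j) t) = \<gamma>' j t"
      using uptk[OF jI, of t] by simp_all
    have normr: "norm (\<gamma> i s - \<gamma> j t) \<le> r"
    proof -
      have "(norm (\<gamma> i s - \<gamma> j t))\<^sup>2 \<le> r\<^sup>2" using Fzs by (simp add: F_def zseq)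
      then show ?thesis by (rule power2_le_imp_le[OF _ less_imp_le[OF rpos]])
    qed
    have Fz0: "F zs = 0"
    proof (rule ccontr)
      assume Fne: "F zs \<noteq> 0"
      then have neq: "\<gamma> i s \<noteq> \<gamma> j t" by (simp add: F_def zseq)
      obtain e where e: "e > 0" "ball zs e \<subseteq> C" using zball by blast
      have locs: "F (s, t) \<le> F (y, t)" if "\<bar>s - y\<bar> < e" for y
      proof -
        have "(y, t) \<in> ball zs e" using that by (simp add: zseq dist_Pair_Pair dist_real_def)
        then show ?thesis using e(2) zmin zseq by blast
      qed
      have loct: "F (s, t) \<le> F (s, y)" if "\<bar>t - y\<bar> < e" for y
      proof -
        have "(s, y) \<in> ball zs e" using that by (simp add: zseq dist_Pair_Pair dist_real_def)
        then show ?thesis using e(2) zmin zseq by blast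
      qed
      have Ds: "((\<lambda>u. F (u, t)) has_real_derivative (2 * ((\<gamma> i s - \<gamma> j t) \<bullet> \<gamma>' i s))) (at s)"
        unfolding F_def fst_conv snd_conv by (rule dist2_deriv[OF gc_parts(5)[OF gi, rule_format]])
      have Dt: "((\<lambda>v. F (s, v)) has_real_derivative (2 * ((\<gamma> j t - \<gamma> i s) \<bullet> \<gamma>' j t))) (at t)"
      proof -
        have "(\<lambda>v. F (s, v)) = (\<lambda>v. (norm (\<gamma> j v - \<gamma> i s))\<^sup>2)"
          by (simp add: F_def norm_minus_commute)
        then show ?thesis by (simp only:) (rule dist2_deriv[OF gc_parts(5)[OF gj, rule_format]])
      qed
      have ps: "(\<gamma> i s - \<gamma> j t) \<bullet> \<gamma>' i s = 0"
        using DERIV_local_min[OF Ds e(1)] locs by simp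
      have pt: "(\<gamma> j t - \<gamma> i s) \<bullet> \<gamma>' j t = 0"
        using DERIV_local_min[OF Dt e(1)] loct by simp
      have pt': "(\<gamma> i s - \<gamma> j t) \<bullet> \<gamma>' j t = 0"
        using pt by (simp add: inner_diff_left)
      have ne: "(i, rep (L i) s) \<noteq> (j, rep (L j) t)" using neq ui uj by auto
      have D0: "((i, rep (L i) s), (j, rep (L j) t)) \<in> D0set I L \<gamma> \<gamma>' - C0set I L \<gamma>"
        unfolding D0set_def C0set_def using pti ptj ne neq ps pt' by (simp add: perp_tline ui uj)
      have "Delta I L \<gamma> \<gamma>' \<le> (\<lambda>(p,q). ereal (norm (upt \<gamma> p - upt \<gamma> q))) ((i, rep (L i) s), (j, rep (L j) t))"
        unfolding Delta_def by (rule INF_lower[OF D0])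
      then have "Delta I L \<gamma> \<gamma>' \<le> ereal (norm (\<gamma> i s - \<gamma> j t))" by (simp add: ui uj)
      also have "\<dots> \<le> ereal r" using normr by simp
      also have "\<dots> < ereal D'" using rr1 by (simp add: r1_def)
      finally show False using D'2 by simp
    qed
    have cross: "\<gamma> i s = \<gamma> j t" using Fz0 by (simp add: F_def zseq)
    have zsG: "zs \<in> G" using zsC CG by blast
    have ne: "(i, rep (L i) s) \<noteq> (j, rep (L j) t)"
    proof
      assume eq: "(i, rep (L i) s) = (j, rep (L j) t)"
      then have ij: "i = j" by simp
      with eq have rr: "rep (L i) s = rep (L i) t" by simp
      define k where "k = \<lfloor>s / L i\<rfloor> - \<lfloor>t / L i\<rfloor>"
      have "s - t - of_int k * L i = rep (L i) s - rep (L i) t"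
        by (simp add: rep_def k_def algebra_simps)
      then have "s - t - of_int k * L i = 0" using rr by simp
      moreover have "\<delta> \<le> \<bar>s - t - of_int k * L i\<bar>" using zsG ij by (simp add: G_def zseq)
      ultimately show False using \<delta>pos by simp
    qed
    have C0: "((i, rep (L i) s), (j, rep (L j) t)) \<in> C0set I L \<gamma>"
      unfolding C0set_def using pti ptj ne cross by (simp add: ui uj)
    have ang: "\<bar>\<gamma>' i s \<bullet> \<gamma>' j t\<bar> \<le> cos Th" using angle_cos[OF C0] by (simp add: ui uj)
    have clb: "norm (\<gamma> i u - \<gamma> j v) \<ge> S * max \<bar>u - s\<bar> \<bar>v - t\<bar> - \<rho> * (max \<bar>u - s\<bar> \<bar>v - t\<bar>)\<^sup>2" for u v
      unfolding S_def by (rule cross_lb[OF gi gj cross ang]) (use S0 in \<open>simp add: S_def\<close>)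
    define g where "g y = max \<bar>fst y - s\<bar> \<bar>snd y - t\<bar>" for y :: "real \<times> real"
    define M where "M = g (a, b)"
    have M0: "0 \<le> M" by (simp add: M_def g_def)
    have MB: "M < B"
    proof (rule ccontr)
      assume "\<not> M < B"
      then have BM: "B \<le> M" by simp
      have "continuous_on C g" unfolding g_def by (intro continuous_intros)
      moreover have "connected C" by (simp add: C_def connected_connected_component)
      ultimately have "connected (g ` C)" by (rule connected_continuous_image)
      moreover have "g zs \<in> g ` C" using zsC by blast
      moreover have "M \<in> g ` C" using abC by (simp add: M_def)
      moreover have "g zs \<le> B" using zseq by (simp add: g_def B_def Spos rho_pos less_imp_le)
      ultimately have "B \<in> g ` C" using BM unfolding connected_iff_interval by blast
      then obtain y where yC: "y \<in> C" and gy: "g y = B" by blast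
      have "norm (\<gamma> i (fst y) - \<gamma> j (snd y)) \<ge> S * B - \<rho> * B\<^sup>2"
        using clb[of "fst y" "snd y"] gy by (simp add: g_def)
      moreover have "S * B - \<rho> * B\<^sup>2 = S\<^sup>2 / (4 * \<rho>)"
        using rho_pos by (simp add: B_def power2_eq_square field_simps)
      moreover have "F y \<le> r'\<^sup>2" using yC CG by (auto simp: G_def)
      then have "(norm (\<gamma> i (fst y) - \<gamma> j (snd y)))\<^sup>2 \<le> r'\<^sup>2" by (simp add: F_def)
      then have "norm (\<gamma> i (fst y) - \<gamma> j (snd y)) \<le> r'"
        by (rule power2_le_imp_le[OF _ less_imp_le[OF r'pos]])
      ultimately show False using r'S by linarith
    qed
    have "r \<ge> S * M - \<rho> * M\<^sup>2" using clb[of a b] by (simp add: r_def M_def g_def)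
    moreover have "r < 2 * r0 - 4 * \<rho> * r0\<^sup>2 / S\<^sup>2" using rr1 by (simp add: r1_def)
    ultimately have Mlt: "M < 2 * r0 / S"
      using quad_finish[OF Spos rho_pos r0pos _ sm2 M0] MB by (simp add: B_def)
    define xs where "xs = (i, rep (L i) s)"
    have "normal_reach I L \<gamma> \<gamma>' xs = 0"
    proof -
      define NS where "NS = {norm (upt \<gamma> xs - upt \<gamma> q) | q. q \<in> pts I L \<and> q \<noteq> xs
                        \<and> (\<forall>v\<in>tline \<gamma>' q. (upt \<gamma> xs - upt \<gamma> q) \<bullet> v = 0)}"
      have "0 \<in> NS"
      proof -
        have z0: "upt \<gamma> xs - upt \<gamma> (j, rep (L j) t) = 0" using cross by (simp add: xs_def ui uj)
        have ne': "(j, rep (L j) t) \<noteq> xs" using ne by (auto simp: xs_def)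
        have pp: "\<forall>v\<in>tline \<gamma>' (j, rep (L j) t). (upt \<gamma> xs - upt \<gamma> (j, rep (L j) t)) \<bullet> v = 0"
          unfolding z0 by simp
        have "norm (upt \<gamma> xs - upt \<gamma> (j, rep (L j) t)) \<in> NS"
          unfolding NS_def using ptj ne' pp by blast
        then show ?thesis unfolding z0 by simp
      qed
      moreover have "\<And>x. x \<in> NS \<Longrightarrow> 0 \<le> x" by (auto simp: NS_def)
      ultimately have "Inf NS = 0" by (rule cInf_eq_minimum)
      then show ?thesis by (simp add: normal_reach_def NS_def)
    qed
    moreover have "gdist L x0 xs \<le> ereal (2 / S * r0)"
    proof -
      define K where "K = {\<bar>a - rep (L i) s + real_of_int k * L i\<bar> | k. True}"
      have "\<bar>a - s\<bar> \<in> K" unfolding K_def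
        by (rule CollectI, rule exI[of _ "- \<lfloor>s / L i\<rfloor>"]) (simp add: rep_def)
      moreover have "bdd_below K" unfolding K_def by (intro bdd_belowI[of _ 0]) auto
      ultimately have "Inf K \<le> \<bar>a - s\<bar>" by (rule cInf_lower)
      moreover have "\<bar>a - s\<bar> \<le> M" by (simp add: M_def g_def)
      ultimately have "Inf K \<le> 2 / S * r0" using Mlt by simp
      then show ?thesis by (simp add: gdist_def x0eq xs_def K_def)
    qed
    moreover have "xs \<in> pts I L" using pti by (simp add: xs_def)
    ultimately show ?thesis by (auto simp: r0_def S_def Th_def)
  qed
qed


end
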